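(* Let $(\Omega,+)$ be a group and let $a,b$ be subgroups of $\Omega$. Then the power set $\mathcal{P}$ of $\Omega$, and also its subset $\mathcal{P}^o$, are semitorsors under each of the following four ternary compositions: $(x,y,z)\mapsto (xyz)_{ab}:=\Gamma(x,a,y,b,z)$; $(x,y,z)\mapsto \check\Gamma(x,a,y,b,z)$; $(x,y,z)\mapsto (xyz)_b:=\Sigma(b,x,y,z)$; $(x,y,z)\mapsto \check\Sigma(b,x,y,z)$.
   Context: $(\Omega,+)$ is a group written additively but not necessarily abelian, with neutral element $o$. $\mathcal{P}$ is the set of all subsets of $\Omega$ and $\mathcal{P}^o$ the set of subsets containing $o$. For $x,a,y,b,z\in\mathcal{P}$: $\Gamma(x,a,y,b,z)=\{\omega\in\Omega:\exists\alpha\in a,\exists\beta\in b:\ \alpha+\omega+\beta\in y,\ \alpha+\omega\in z,\ \omega+\beta\in x\}$; $\check\Gamma(x,a,y,b,z)=\{\omega\in\Omega:\exists\alpha\in a,\exists\beta\in b:\ \beta+\omega+\alpha\in y,\ \omega+\alpha\in z,\ \beta+\omega\in x\}$; $\Sigma(b,x,y,z)=\{\omega\in\Omega:\exists\beta,\beta'\in b:\ \omega+\beta\in x,\ \omega+\beta'+\beta\in y,\ \omega+\beta'\in z\}$; $\check\Sigma(b,x,y,z)=\{\omega\in\Omega:\exists\beta,\beta'\in b:\ \beta+\omega\in x,\ \beta+\beta'+\omega\in y,\ \beta'+\omega\in z\}$. A semitorsor is a set $G$ with a map $G^3\to G$, $(x,y,z)\mapsto(xyz)$, satisfying the para-associative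 law $(xy(zuv))=(x(uzy)v)=((xyz)uv)$ for all $x,y,z,u,v\in G$. *)

theory Defs
  imports Main
begin

text \<open>The group (Omega,+) is the type 'a of class group_add (not necessarily abelian);
  its neutral element o is 0. Sets of elements are subsets of Omega.\<close>

definition is_subgroup :: "'a::group_add set \<Rightarrow> bool" where
  "is_subgroup a \<longleftrightarrow> 0 \<in> a \<and> (\<forall>x\<in>a. \<forall>y\<in>a. x + y \<in> a) \<and> (\<forall>x\<in>a. - x \<in> a)"

definition Gamma :: "'a::group_add set \<Rightarrow> 'a set \<Rightarrow> 'a set \<Rightarrow> 'a set \<Rightarrow> 'a set \<Rightarrow> 'a set" where
  "Gamma x a y b z = {w. \<exists>\<alpha>\<in>a. \<exists>\<beta>\<in>b. \<alpha> + w + \<beta> \<in> y \<and> \<alpha> + w \<in> z \<and> w + \<beta> \<in> x}"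

definition Gamma_check :: "'a::group_add set \<Rightarrow> 'a set \<Rightarrow> 'a set \<Rightarrow> 'a set \<Rightarrow> 'a set \<Rightarrow> 'a set" where
  "Gamma_check x a y b z = {w. \<exists>\<alpha>\<in>a. \<exists>\<beta>\<in>b. \<beta> + w + \<alpha> \<in> y \<and> w + \<alpha> \<in> z \<and> \<beta> + w \<in> x}"

definition Sigma_op :: "'a::group_add set \<Rightarrow> 'a set \<Rightarrow> 'a set \<Rightarrow> 'a set \<Rightarrow> 'a set" where
  "Sigma_op b x y z = {w. \<exists>\<beta>\<in>b. \<exists>\<beta>'\<in>b. w + \<beta> \<in> x \<and> w + \<beta>' + \<beta> \<in> y \<and> w + \<beta>' \<in> z}"

definition Sigma_check :: "'a::group_add set \<Rightarrow> 'a set \<Rightarrow> 'a set \<Rightarrow> 'a set \<Rightarrow> 'a set" where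
  "Sigma_check b x y z = {w. \<exists>\<beta>\<in>b. \<exists>\<beta>'\<in>b. \<beta> + w \<in> x \<and> \<beta> + \<beta>' + w \<in> y \<and> \<beta>' + w \<in> z}"

definition semitorsor :: "'b set \<Rightarrow> ('b \<Rightarrow> 'b \<Rightarrow> 'b \<Rightarrow> 'b) \<Rightarrow> bool" where
  "semitorsor G m \<longleftrightarrow>
     (\<forall>x\<in>G. \<forall>y\<in>G. \<forall>z\<in>G. m x y z \<in> G) \<and>
     (\<forall>x\<in>G. \<forall>y\<in>G. \<forall>z\<in>G. \<forall>u\<in>G. \<forall>v\<in>G.
        m x y (m z u v) = m x (m u z y) v \<and> m x (m u z y) v = m (m x y z) u v)"

end

theory Submission
  imports Defs
begin

lemma sg0: "is_subgroup b \<Longrightarrow> (0::'a::group_add) \<in> b" by (simp add: is_subgroup_def)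
lemma sgadd[simp]: "is_subgroup b \<Longrightarrow> x \<in> b \<Longrightarrow> y \<in> b \<Longrightarrow> (x::'a::group_add) + y \<in> b"
  by (simp add: is_subgroup_def)
lemma sgneg[simp]: "is_subgroup b \<Longrightarrow> x \<in> b \<Longrightarrow> - (x::'a::group_add) \<in> b"
  by (simp add: is_subgroup_def)

lemma sgdiff[simp]: "is_subgroup b \<Longrightarrow> x \<in> b \<Longrightarrow> y \<in> b \<Longrightarrow> (x::'a::group_add) - y \<in> b"
  using sgadd sgneg by (metis diff_conv_add_uminus)

lemma GL: "w \<in> Gamma x a y b (Gamma z a u b v) \<longleftrightarrow> (\<exists>\<alpha>\<in>a. \<exists>\<beta>\<in>b. \<exists>\<alpha>'\<in>a. \<exists>\<beta>'\<in>b.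
   w+\<beta>\<in>x \<and> \<alpha>+w+\<beta>\<in>y \<and> \<alpha>+w+\<beta>'\<in>z \<and> \<alpha>'+\<alpha>+w+\<beta>'\<in>u \<and> \<alpha>'+\<alpha>+w\<in>v)"
  by (auto simp: Gamma_def add.assoc)
lemma GM: "w \<in> Gamma x a (Gamma u a z b y) b v \<longleftrightarrow> (\<exists>\<alpha>\<in>a. \<exists>\<beta>\<in>b. \<exists>\<alpha>'\<in>a. \<exists>\<beta>'\<in>b.
   w+\<beta>\<in>x \<and> \<alpha>'+\<alpha>+w+\<beta>\<in>y \<and> \<alpha>'+\<alpha>+w+\<beta>+\<beta>'\<in>z \<and> \<alpha>+w+\<beta>+\<beta>'\<in>u \<and> \<alpha>+w\<in>v)"
  by (auto simp: Gamma_def add.assoc)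
lemma GR: "w \<in> Gamma (Gamma x a y b z) a u b v \<longleftrightarrow> (\<exists>\<alpha>\<in>a. \<exists>\<beta>\<in>b. \<exists>\<alpha>'\<in>a. \<exists>\<beta>'\<in>b.
   w+\<beta>+\<beta>'\<in>x \<and> \<alpha>'+w+\<beta>+\<beta>'\<in>y \<and> \<alpha>'+w+\<beta>\<in>z \<and> \<alpha>+w+\<beta>\<in>u \<and> \<alpha>+w\<in>v)"
  by (auto simp: Gamma_def add.assoc)

lemma GLM:
  assumes A: "is_subgroup a" and B: "is_subgroup b"
  shows "Gamma x a y b (Gamma z a u b v) = Gamma x a (Gamma u a z b y) b v"
proof (rule set_eqI)
  fix w
  show "w \<in> Gamma x a y b (Gamma z a u b v) \<longleftrightarrow> w \<in> Gamma x a (Gamma u a z b y) b v"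
  proof
    assume "w \<in> Gamma x a y b (Gamma z a u b v)"
    then obtain \<alpha> \<beta> \<alpha>' \<beta>' where h: "\<alpha>\<in>a" "\<beta>\<in>b" "\<alpha>'\<in>a" "\<beta>'\<in>b"
      "w+\<beta>\<in>x" "\<alpha>+w+\<beta>\<in>y" "\<alpha>+w+\<beta>'\<in>z" "\<alpha>'+\<alpha>+w+\<beta>'\<in>u" "\<alpha>'+\<alpha>+w\<in>v" unfolding GL by blast
    show "w \<in> Gamma x a (Gamma u a z b y) b v" unfolding GM
      apply (rule bexI[of _ "\<alpha>'+\<alpha>"], rule bexI[of _ "\<beta>"], rule bexI[of _ "-\<alpha>'"], rule bexI[of _ "-\<beta>+\<beta>'"])
      using h A B by (simp_all add: add.assoc diff_conv_add_uminus minus_add del: add_uminus_conv_diff)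
  next
    assume "w \<in> Gamma x a (Gamma u a z b y) b v"
    then obtain \<alpha> \<beta> \<alpha>' \<beta>' where h: "\<alpha>\<in>a" "\<beta>\<in>b" "\<alpha>'\<in>a" "\<beta>'\<in>b"
      "w+\<beta>\<in>x" "\<alpha>'+\<alpha>+w+\<beta>\<in>y" "\<alpha>'+\<alpha>+w+\<beta>+\<beta>'\<in>z" "\<alpha>+w+\<beta>+\<beta>'\<in>u" "\<alpha>+w\<in>v" unfolding GM by blast
    show "w \<in> Gamma x a y b (Gamma z a u b v)" unfolding GL
      apply (rule bexI[of _ "\<alpha>'+\<alpha>"], rule bexI[of _ "\<beta>"], rule bexI[of _ "-\<alpha>'"], rule bexI[of _ "\<beta>+\<beta>'"])
      using h A B by (simp_all add: add.assoc diff_conv_add_uminus minus_add del: add_uminus_conv_diff)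
  qed
qed

lemma GLR:
  assumes A: "is_subgroup a" and B: "is_subgroup b"
  shows "Gamma x a y b (Gamma z a u b v) = Gamma (Gamma x a y b z) a u b v"
proof (rule set_eqI)
  fix w
  show "w \<in> Gamma x a y b (Gamma z a u b v) \<longleftrightarrow> w \<in> Gamma (Gamma x a y b z) a u b v"
  proof
    assume "w \<in> Gamma x a y b (Gamma z a u b v)"
    then obtain \<alpha> \<beta> \<alpha>' \<beta>' where h: "\<alpha>\<in>a" "\<beta>\<in>b" "\<alpha>'\<in>a" "\<beta>'\<in>b"
      "w+\<beta>\<in>x" "\<alpha>+w+\<beta>\<in>y" "\<alpha>+w+\<beta>'\<in>z" "\<alpha>'+\<alpha>+w+\<beta>'\<in>u" "\<alpha>'+\<alpha>+w\<in>v" unfolding GL by blast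
    show "w \<in> Gamma (Gamma x a y b z) a u b v" unfolding GR
      apply (rule bexI[of _ "\<alpha>'+\<alpha>"], rule bexI[of _ "\<beta>'"], rule bexI[of _ "\<alpha>"], rule bexI[of _ "-\<beta>'+\<beta>"])
      using h A B by (simp_all add: add.assoc diff_conv_add_uminus minus_add del: add_uminus_conv_diff)
  next
    assume "w \<in> Gamma (Gamma x a y b z) a u b v"
    then obtain \<alpha> \<beta> \<alpha>' \<beta>' where h: "\<alpha>\<in>a" "\<beta>\<in>b" "\<alpha>'\<in>a" "\<beta>'\<in>b"
      "w+\<beta>+\<beta>'\<in>x" "\<alpha>'+w+\<beta>+\<beta>'\<in>y" "\<alpha>'+w+\<beta>\<in>z" "\<alpha>+w+\<beta>\<in>u" "\<alpha>+w\<in>v" unfolding GR by blast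
    show "w \<in> Gamma x a y b (Gamma z a u b v)" unfolding GL
      apply (rule bexI[of _ "\<alpha>'"], rule bexI[of _ "\<beta>+\<beta>'"], rule bexI[of _ "\<alpha>+-\<alpha>'"], rule bexI[of _ "\<beta>"])
      using h A B by (simp_all add: add.assoc diff_conv_add_uminus minus_add del: add_uminus_conv_diff)
  qed
qed
lemma CL: "w \<in> Gamma_check x a y b (Gamma_check z a u b v) \<longleftrightarrow> (\<exists>\<alpha>\<in>a. \<exists>\<beta>\<in>b. \<exists>\<alpha>'\<in>a. \<exists>\<beta>'\<in>b. \<beta>+w\<in>x \<and> \<beta>+w+\<alpha>\<in>y \<and> \<beta>'+w+\<alpha>\<in>z \<and> \<beta>'+w+\<alpha>+\<alpha>'\<in>u \<and> w+\<alpha>+\<alpha>'\<in>v)"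
  by (auto simp: Gamma_check_def add.assoc)

lemma CM: "w \<in> Gamma_check x a (Gamma_check u a z b y) b v \<longleftrightarrow> (\<exists>\<alpha>\<in>a. \<exists>\<beta>\<in>b. \<exists>\<alpha>'\<in>a. \<exists>\<beta>'\<in>b. \<beta>+w\<in>x \<and> \<beta>+w+\<alpha>+\<alpha>'\<in>y \<and> \<beta>'+\<beta>+w+\<alpha>+\<alpha>'\<in>z \<and> \<beta>'+\<beta>+w+\<alpha>\<in>u \<and> w+\<alpha>\<in>v)"
  by (auto simp: Gamma_check_def add.assoc)

lemma CR: "w \<in> Gamma_check (Gamma_check x a y b z) a u b v \<longleftrightarrow> (\<exists>\<alpha>\<in>a. \<exists>\<beta>\<in>b. \<exists>\<alpha>'\<in>a. \<exists>\<beta>'\<in>b. \<beta>'+\<beta>+w\<in>x \<and> \<beta>'+\<beta>+w+\<alpha>'\<in>y \<and> \<beta>+w+\<alpha>'\<in>z \<and> \<beta>+w+\<alpha>\<in>u \<and> w+\<alpha>\<in>v)"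
  by (auto simp: Gamma_check_def add.assoc)

lemma CLM:
  assumes A: "is_subgroup a" and B: "is_subgroup b"
  shows "Gamma_check x a y b (Gamma_check z a u b v) = Gamma_check x a (Gamma_check u a z b y) b v"
proof (rule set_eqI)
  fix w
  show "w \<in> Gamma_check x a y b (Gamma_check z a u b v) \<longleftrightarrow> w \<in> Gamma_check x a (Gamma_check u a z b y) b v"
  proof
    assume "w \<in> Gamma_check x a y b (Gamma_check z a u b v)"
    then obtain \<alpha> \<beta> \<alpha>' \<beta>' where h: "\<alpha>\<in>a" "\<beta>\<in>b" "\<alpha>'\<in>a" "\<beta>'\<in>b" "\<beta>+w\<in>x" "\<beta>+w+\<alpha>\<in>y" "\<beta>'+w+\<alpha>\<in>z" "\<beta>'+w+\<alpha>+\<alpha>'\<in>u" "w+\<alpha>+\<alpha>'\<in>v" unfolding CL by blast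
    show "w \<in> Gamma_check x a (Gamma_check u a z b y) b v" unfolding CM
      apply (rule bexI[of _ "\<alpha>+\<alpha>'"], rule bexI[of _ "\<beta>"], rule bexI[of _ "-\<alpha>'"], rule bexI[of _ "\<beta>'+-\<beta>"])
      using h A B by (simp_all add: add.assoc diff_conv_add_uminus minus_add del: add_uminus_conv_diff)
  next
    assume "w \<in> Gamma_check x a (Gamma_check u a z b y) b v"
    then obtain \<alpha> \<beta> \<alpha>' \<beta>' where h: "\<alpha>\<in>a" "\<beta>\<in>b" "\<alpha>'\<in>a" "\<beta>'\<in>b" "\<beta>+w\<in>x" "\<beta>+w+\<alpha>+\<alpha>'\<in>y" "\<beta>'+\<beta>+w+\<alpha>+\<alpha>'\<in>z" "\<beta>'+\<beta>+w+\<alpha>\<in>u" "w+\<alpha>\<in>v" unfolding CM by blast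
    show "w \<in> Gamma_check x a y b (Gamma_check z a u b v)" unfolding CL
      apply (rule bexI[of _ "\<alpha>+\<alpha>'"], rule bexI[of _ "\<beta>"], rule bexI[of _ "-\<alpha>'"], rule bexI[of _ "\<beta>'+\<beta>"])
      using h A B by (simp_all add: add.assoc diff_conv_add_uminus minus_add del: add_uminus_conv_diff)
  qed
qed

lemma CLR:
  assumes A: "is_subgroup a" and B: "is_subgroup b"
  shows "Gamma_check x a y b (Gamma_check z a u b v) = Gamma_check (Gamma_check x a y b z) a u b v"
proof (rule set_eqI)
  fix w
  show "w \<in> Gamma_check x a y b (Gamma_check z a u b v) \<longleftrightarrow> w \<in> Gamma_check (Gamma_check x a y b z) a u b v"
  proof
    assume "w \<in> Gamma_check x a y b (Gamma_check z a u b v)"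
    then obtain \<alpha> \<beta> \<alpha>' \<beta>' where h: "\<alpha>\<in>a" "\<beta>\<in>b" "\<alpha>'\<in>a" "\<beta>'\<in>b" "\<beta>+w\<in>x" "\<beta>+w+\<alpha>\<in>y" "\<beta>'+w+\<alpha>\<in>z" "\<beta>'+w+\<alpha>+\<alpha>'\<in>u" "w+\<alpha>+\<alpha>'\<in>v" unfolding CL by blast
    show "w \<in> Gamma_check (Gamma_check x a y b z) a u b v" unfolding CR
      apply (rule bexI[of _ "\<alpha>+\<alpha>'"], rule bexI[of _ "\<beta>'"], rule bexI[of _ "\<alpha>"], rule bexI[of _ "\<beta>+-\<beta>'"])
      using h A B by (simp_all add: add.assoc diff_conv_add_uminus minus_add del: add_uminus_conv_diff)
  next
    assume "w \<in> Gamma_check (Gamma_check x a y b z) a u b v"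
    then obtain \<alpha> \<beta> \<alpha>' \<beta>' where h: "\<alpha>\<in>a" "\<beta>\<in>b" "\<alpha>'\<in>a" "\<beta>'\<in>b" "\<beta>'+\<beta>+w\<in>x" "\<beta>'+\<beta>+w+\<alpha>'\<in>y" "\<beta>+w+\<alpha>'\<in>z" "\<beta>+w+\<alpha>\<in>u" "w+\<alpha>\<in>v" unfolding CR by blast
    show "w \<in> Gamma_check x a y b (Gamma_check z a u b v)" unfolding CL
      apply (rule bexI[of _ "\<alpha>'"], rule bexI[of _ "\<beta>'+\<beta>"], rule bexI[of _ "-\<alpha>'+\<alpha>"], rule bexI[of _ "\<beta>"])
      using h A B by (simp_all add: add.assoc diff_conv_add_uminus minus_add del: add_uminus_conv_diff)
  qed
qed

lemma SL: "w \<in> Sigma_op b x y (Sigma_op b z u v) \<longleftrightarrow> (\<exists>p\<in>b. \<exists>q\<in>b. \<exists>r\<in>b. \<exists>s\<in>b. w+p\<in>x \<and> w+q+p\<in>y \<and> w+q+r\<in>z \<and> w+q+s+r\<in>u \<and> w+q+s\<in>v)"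
  by (auto simp: Sigma_op_def add.assoc)

lemma SM: "w \<in> Sigma_op b x (Sigma_op b u z y) v \<longleftrightarrow> (\<exists>p\<in>b. \<exists>q\<in>b. \<exists>r\<in>b. \<exists>s\<in>b. w+p\<in>x \<and> w+q+p+r\<in>u \<and> w+q+p+s+r\<in>z \<and> w+q+p+s\<in>y \<and> w+q\<in>v)"
  by (auto simp: Sigma_op_def add.assoc)

lemma SR: "w \<in> Sigma_op b (Sigma_op b x y z) u v \<longleftrightarrow> (\<exists>p\<in>b. \<exists>q\<in>b. \<exists>r\<in>b. \<exists>s\<in>b. w+p+r\<in>x \<and> w+p+s+r\<in>y \<and> w+p+s\<in>z \<and> w+q+p\<in>u \<and> w+q\<in>v)"
  by (auto simp: Sigma_op_def add.assoc)

lemma SLM: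
  assumes A: "is_subgroup a" and B: "is_subgroup b"
  shows "Sigma_op b x y (Sigma_op b z u v) = Sigma_op b x (Sigma_op b u z y) v"
proof (rule set_eqI)
  fix w
  show "w \<in> Sigma_op b x y (Sigma_op b z u v) \<longleftrightarrow> w \<in> Sigma_op b x (Sigma_op b u z y) v"
  proof
    assume "w \<in> Sigma_op b x y (Sigma_op b z u v)"
    then obtain p q r s where h: "p\<in>b" "q\<in>b" "r\<in>b" "s\<in>b" "w+p\<in>x" "w+q+p\<in>y" "w+q+r\<in>z" "w+q+s+r\<in>u" "w+q+s\<in>v" unfolding SL by blast
    show "w \<in> Sigma_op b x (Sigma_op b u z y) v" unfolding SM
      apply (rule bexI[of _ "p"], rule bexI[of _ "q+s"], rule bexI[of _ "-p+r"], rule bexI[of _ "-p+-s+p"])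
      using h A B by (simp_all add: add.assoc diff_conv_add_uminus minus_add del: add_uminus_conv_diff)
  next
    assume "w \<in> Sigma_op b x (Sigma_op b u z y) v"
    then obtain p q r s where h: "p\<in>b" "q\<in>b" "r\<in>b" "s\<in>b" "w+p\<in>x" "w+q+p+r\<in>u" "w+q+p+s+r\<in>z" "w+q+p+s\<in>y" "w+q\<in>v" unfolding SM by blast
    show "w \<in> Sigma_op b x y (Sigma_op b z u v)" unfolding SL
      apply (rule bexI[of _ "p"], rule bexI[of _ "q+p+s+-p"], rule bexI[of _ "p+r"], rule bexI[of _ "-(q+p+s+-p)+q"])
      using h A B by (simp_all add: add.assoc diff_conv_add_uminus minus_add del: add_uminus_conv_diff)
  qed
qed

lemma SLR:
  assumes A: "is_subgroup a" and B: "is_subgroup b"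
  shows "Sigma_op b x y (Sigma_op b z u v) = Sigma_op b (Sigma_op b x y z) u v"
proof (rule set_eqI)
  fix w
  show "w \<in> Sigma_op b x y (Sigma_op b z u v) \<longleftrightarrow> w \<in> Sigma_op b (Sigma_op b x y z) u v"
  proof
    assume "w \<in> Sigma_op b x y (Sigma_op b z u v)"
    then obtain p q r s where h: "p\<in>b" "q\<in>b" "r\<in>b" "s\<in>b" "w+p\<in>x" "w+q+p\<in>y" "w+q+r\<in>z" "w+q+s+r\<in>u" "w+q+s\<in>v" unfolding SL by blast
    show "w \<in> Sigma_op b (Sigma_op b x y z) u v" unfolding SR
      apply (rule bexI[of _ "r"], rule bexI[of _ "q+s"], rule bexI[of _ "-r+p"], rule bexI[of _ "-r+q+r"])
      using h A B by (simp_all add: add.assoc diff_conv_add_uminus minus_add del: add_uminus_conv_diff)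
  next
    assume "w \<in> Sigma_op b (Sigma_op b x y z) u v"
    then obtain p q r s where h: "p\<in>b" "q\<in>b" "r\<in>b" "s\<in>b" "w+p+r\<in>x" "w+p+s+r\<in>y" "w+p+s\<in>z" "w+q+p\<in>u" "w+q\<in>v" unfolding SR by blast
    show "w \<in> Sigma_op b x y (Sigma_op b z u v)" unfolding SL
      apply (rule bexI[of _ "p+r"], rule bexI[of _ "p+s+-p"], rule bexI[of _ "p"], rule bexI[of _ "-(p+s+-p)+q"])
      using h A B by (simp_all add: add.assoc diff_conv_add_uminus minus_add del: add_uminus_conv_diff)
  qed
qed

lemma KL: "w \<in> Sigma_check b x y (Sigma_check b z u v) \<longleftrightarrow> (\<exists>p\<in>b. \<exists>q\<in>b. \<exists>r\<in>b. \<exists>s\<in>b. p+w\<in>x \<and> p+q+w\<in>y \<and> r+q+w\<in>z \<and> r+s+q+w\<in>u \<and> s+q+w\<in>v)"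
  by (auto simp: Sigma_check_def add.assoc)

lemma KM: "w \<in> Sigma_check b x (Sigma_check b u z y) v \<longleftrightarrow> (\<exists>p\<in>b. \<exists>q\<in>b. \<exists>r\<in>b. \<exists>s\<in>b. p+w\<in>x \<and> r+p+q+w\<in>u \<and> r+s+p+q+w\<in>z \<and> s+p+q+w\<in>y \<and> q+w\<in>v)"
  by (auto simp: Sigma_check_def add.assoc)

lemma KR: "w \<in> Sigma_check b (Sigma_check b x y z) u v \<longleftrightarrow> (\<exists>p\<in>b. \<exists>q\<in>b. \<exists>r\<in>b. \<exists>s\<in>b. r+p+w\<in>x \<and> r+s+p+w\<in>y \<and> s+p+w\<in>z \<and> p+q+w\<in>u \<and> q+w\<in>v)"
  by (auto simp: Sigma_check_def add.assoc)

lemma KLM: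
  assumes A: "is_subgroup a" and B: "is_subgroup b"
  shows "Sigma_check b x y (Sigma_check b z u v) = Sigma_check b x (Sigma_check b u z y) v"
proof (rule set_eqI)
  fix w
  show "w \<in> Sigma_check b x y (Sigma_check b z u v) \<longleftrightarrow> w \<in> Sigma_check b x (Sigma_check b u z y) v"
  proof
    assume "w \<in> Sigma_check b x y (Sigma_check b z u v)"
    then obtain p q r s where h: "p\<in>b" "q\<in>b" "r\<in>b" "s\<in>b" "p+w\<in>x" "p+q+w\<in>y" "r+q+w\<in>z" "r+s+q+w\<in>u" "s+q+w\<in>v" unfolding KL by blast
    show "w \<in> Sigma_check b x (Sigma_check b u z y) v" unfolding KM
      apply (rule bexI[of _ "p"], rule bexI[of _ "s+q"], rule bexI[of _ "r+-p"], rule bexI[of _ "p+-s+-p"])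
      using h A B by (simp_all add: add.assoc diff_conv_add_uminus minus_add del: add_uminus_conv_diff)
  next
    assume "w \<in> Sigma_check b x (Sigma_check b u z y) v"
    then obtain p q r s where h: "p\<in>b" "q\<in>b" "r\<in>b" "s\<in>b" "p+w\<in>x" "r+p+q+w\<in>u" "r+s+p+q+w\<in>z" "s+p+q+w\<in>y" "q+w\<in>v" unfolding KM by blast
    show "w \<in> Sigma_check b x y (Sigma_check b z u v)" unfolding KL
      apply (rule bexI[of _ "p"], rule bexI[of _ "-p+s+p+q"], rule bexI[of _ "r+p"], rule bexI[of _ "q+-(-p+s+p+q)"])
      using h A B by (simp_all add: add.assoc diff_conv_add_uminus minus_add del: add_uminus_conv_diff)
  qed
qed

lemma KLR:
  assumes A: "is_subgroup a" and B: "is_subgroup b"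
  shows "Sigma_check b x y (Sigma_check b z u v) = Sigma_check b (Sigma_check b x y z) u v"
proof (rule set_eqI)
  fix w
  show "w \<in> Sigma_check b x y (Sigma_check b z u v) \<longleftrightarrow> w \<in> Sigma_check b (Sigma_check b x y z) u v"
  proof
    assume "w \<in> Sigma_check b x y (Sigma_check b z u v)"
    then obtain p q r s where h: "p\<in>b" "q\<in>b" "r\<in>b" "s\<in>b" "p+w\<in>x" "p+q+w\<in>y" "r+q+w\<in>z" "r+s+q+w\<in>u" "s+q+w\<in>v" unfolding KL by blast
    show "w \<in> Sigma_check b (Sigma_check b x y z) u v" unfolding KR
      apply (rule bexI[of _ "r"], rule bexI[of _ "s+q"], rule bexI[of _ "p+-r"], rule bexI[of _ "r+q+-r"])
      using h A B by (simp_all add: add.assoc diff_conv_add_uminus minus_add del: add_uminus_conv_diff)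
  next
    assume "w \<in> Sigma_check b (Sigma_check b x y z) u v"
    then obtain p q r s where h: "p\<in>b" "q\<in>b" "r\<in>b" "s\<in>b" "r+p+w\<in>x" "r+s+p+w\<in>y" "s+p+w\<in>z" "p+q+w\<in>u" "q+w\<in>v" unfolding KR by blast
    show "w \<in> Sigma_check b x y (Sigma_check b z u v)" unfolding KL
      apply (rule bexI[of _ "r+p"], rule bexI[of _ "-p+s+p"], rule bexI[of _ "p"], rule bexI[of _ "q+-(-p+s+p)"])
      using h A B by (simp_all add: add.assoc diff_conv_add_uminus minus_add del: add_uminus_conv_diff)
  qed
qed


lemma G0: "is_subgroup a \<Longrightarrow> is_subgroup b \<Longrightarrow> 0 \<in> x \<Longrightarrow> 0 \<in> y \<Longrightarrow> 0 \<in> z \<Longrightarrow> (0::'a::group_add) \<in> Gamma x a y b z"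
  unfolding Gamma_def by (auto intro!: bexI[of _ 0] sg0)
lemma C0: "is_subgroup a \<Longrightarrow> is_subgroup b \<Longrightarrow> 0 \<in> x \<Longrightarrow> 0 \<in> y \<Longrightarrow> 0 \<in> z \<Longrightarrow> (0::'a::group_add) \<in> Gamma_check x a y b z"
  unfolding Gamma_check_def by (auto intro!: bexI[of _ 0] sg0)
lemma S0: "is_subgroup b \<Longrightarrow> 0 \<in> x \<Longrightarrow> 0 \<in> y \<Longrightarrow> 0 \<in> z \<Longrightarrow> (0::'a::group_add) \<in> Sigma_op b x y z"
  unfolding Sigma_op_def by (auto intro!: bexI[of _ 0] sg0)
lemma K0: "is_subgroup b \<Longrightarrow> 0 \<in> x \<Longrightarrow> 0 \<in> y \<Longrightarrow> 0 \<in> z \<Longrightarrow> (0::'a::group_add) \<in> Sigma_check b x y z"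
  unfolding Sigma_check_def by (auto intro!: bexI[of _ 0] sg0)

theorem theorem3p1:
  fixes a b :: "'a::group_add set"
  assumes "is_subgroup a" and "is_subgroup b"
  shows "semitorsor (UNIV :: 'a set set) (\<lambda>x y z. Gamma x a y b z)
       \<and> semitorsor {x :: 'a set. 0 \<in> x} (\<lambda>x y z. Gamma x a y b z)
       \<and> semitorsor (UNIV :: 'a set set) (\<lambda>x y z. Gamma_check x a y b z)
       \<and> semitorsor {x :: 'a set. 0 \<in> x} (\<lambda>x y z. Gamma_check x a y b z)
       \<and> semitorsor (UNIV :: 'a set set) (\<lambda>x y z. Sigma_op b x y z)
       \<and> semitorsor {x :: 'a set. 0 \<in> x} (\<lambda>x y z. Sigma_op b x y z)
       \<and> semitorsor (UNIV :: 'a set set) (\<lambda>x y z. Sigma_check b x y z)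
       \<and> semitorsor {x :: 'a set. 0 \<in> x} (\<lambda>x y z. Sigma_check b x y z)"
  using assms
  unfolding semitorsor_def
  by (simp add: GLM GLR CLM CLR SLM SLR KLM KLR G0 C0 S0 K0 flip: GLM CLM SLM KLM)

end
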